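(* Let $\mathbf r=\binom{r_1}{r_2}\in\mathbb Q^2$ and let $a,b,d\in\mathbb Z$ with $0\le b<a$ and $d\ge1$. Then for $\tau\in\mathbb H$, $$\varpi_{\mathbf r}\Big(\frac{a\tau+b}{d}\Big)=\prod_{j=0}^{a-1}\prod_{\ell=0}^{d-1}\varpi_{M^{-1}\binom{j+r_1}{\ell+r_2}}(\tau),\qquad M=\begin{pmatrix}a&b\\0&d\end{pmatrix}.$$
   Context: $e(z)=e^{2\pi iz}$; $\mathbb H$ the upper half plane; $\varpi(z,\tau)=\prod_{k\ge0}(1-e(z+k\tau))$, and for $\mathbf s=\binom{s_1}{s_2}\in\mathbb R^2$, $\varpi_{\mathbf s}(\tau)=\varpi(s_2\tau-s_1,\tau)$. *)

theory Defs
  imports "HOL-Analysis.Analysis"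
begin

definition e :: "complex \<Rightarrow> complex" where
  "e z = exp (2 * of_real pi * \<i> * z)"

definition varpi :: "complex \<Rightarrow> complex \<Rightarrow> complex" where
  "varpi z \<tau> = (\<Prod>k. 1 - e (z + of_nat k * \<tau>))"

definition varpi_s :: "real^2 \<Rightarrow> complex \<Rightarrow> complex" where
  "varpi_s s \<tau> = varpi (of_real (s $ 2) * \<tau> - of_real (s $ 1)) \<tau>"

definition matM :: "int \<Rightarrow> int \<Rightarrow> int \<Rightarrow> real^2^2" where
  "matM a b d = vector [vector [of_int a, of_int b], vector [0, of_int d]]"

end

theory Submission imports Defs "HOL-Computational_Algebra.Polynomial" begin

lemma matM_inv:
  assumes "a \<noteq> 0" "d \<noteq> 0"
  shows "matrix_inv (matM a b d) = vector [vector [1 / of_int a, - of_int b / (of_int a * of_int d)], vector [0, 1 / of_int d]]"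
    (is "_ = ?B")
proof -
  have 1: "matM a b d ** ?B = mat 1" and 2: "?B ** matM a b d = mat 1"
    using assms by (auto simp: vec_eq_iff matrix_matrix_mult_def forall_2 sum_2 matM_def mat_def field_simps)
  show ?thesis unfolding matrix_inv_def
  proof (rule some_equality)
    show "matM a b d ** ?B = mat 1 \<and> ?B ** matM a b d = mat 1" using 1 2 by blast
  next
    fix C assume "matM a b d ** C = mat 1 \<and> C ** matM a b d = mat 1"
    hence "?B ** (matM a b d ** C) = ?B" by (simp add: matrix_mul_rid)
    thus "C = ?B" using 2 by (simp add: matrix_mul_assoc matrix_mul_lid)
  qed
qed

lemma inv_apply:
  assumes "a \<noteq> 0" "d \<noteq> 0"
  shows "(matrix_inv (matM a b d) *v vector [x, y]) $ 1 = x / of_int a - of_int b * y / (of_int a * of_int d)"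
    "(matrix_inv (matM a b d) *v vector [x, y]) $ 2 = y / of_int d"
  using assms by (auto simp: matM_inv matrix_vector_mult_def sum_2 field_simps)

lemma e_add: "e (x + y) = e x * e y"
  by (simp add: e_def distrib_left exp_add)
lemma e_int: "e (of_int n) = 1"
  unfolding e_def using exp_integer_2pi[of "of_int n"] by (simp add: mult_ac)
lemma e_nat_mult: "e (of_nat n * x) = e x ^ n"
  unfolding e_def by (simp add: exp_of_nat_mult[symmetric] mult_ac)
lemma norm_e: "norm (e z) = exp (- 2 * pi * Im z)"
  unfolding e_def by simp


lemma varpi_lim:
  assumes "Im \<tau> > 0"
  shows "(\<lambda>n. \<Prod>k<n. 1 - e (z + of_nat k * \<tau>)) \<longlonglongrightarrow> varpi z \<tau>"
proof -
  define f where "f = (\<lambda>k::nat. 1 - e (z + of_nat k * \<tau>))"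
  have nf: "norm (f k - 1) = exp (- 2 * pi * Im z) * exp (- 2 * pi * Im \<tau>) ^ k" for k
    by (simp add: f_def norm_e exp_of_nat_mult[symmetric] algebra_simps exp_add[symmetric])
  have "summable (\<lambda>k. exp (- 2 * pi * Im z) * exp (- 2 * pi * Im \<tau>) ^ k)"
    using assms by (intro summable_mult summable_geometric) auto
  hence "summable (\<lambda>k. norm (f k - 1))" by (simp add: nf)
  hence "abs_convergent_prod f" by (rule summable_imp_abs_convergent_prod)
  hence "convergent_prod f" by (rule abs_convergent_prod_imp_convergent_prod)
  hence "(\<lambda>n. \<Prod>i\<le>n. f i) \<longlonglongrightarrow> prodinf f" by (rule convergent_prod_LIMSEQ)
  hence "(\<lambda>n. \<Prod>i<Suc n. f i) \<longlonglongrightarrow> prodinf f" by (simp add: lessThan_Suc_atMost)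
  hence "(\<lambda>n. \<Prod>i<n. f i) \<longlonglongrightarrow> prodinf f" by (rule filterlim_sequentially_Suc[THEN iffD1])
  thus ?thesis by (simp add: f_def varpi_def)
qed

lemma prod_roots:
  assumes "n > 0"
  shows "(\<Prod>j<n. 1 - y * cis (- 2 * pi * real j / real n)) = 1 - y ^ n"
proof -
  define p where "p = (\<Prod>j<n. [:1, - cis (- 2 * pi * real j / real n):])"
  define q :: "complex poly" where "q = 1 - monom 1 n"
  define A where "A = insert 0 {z::complex. z ^ n = 1}"
  have pp: "poly p x = (\<Prod>j<n. 1 - x * cis (- 2 * pi * real j / real n))" for x
    by (simp add: p_def poly_prod mult_ac)
  have pq: "poly q x = 1 - x ^ n" for x by (simp add: q_def poly_monom)
  have cardA: "card A = Suc n"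
    using assms by (subst A_def, subst card_insert_disjoint) (auto simp: finite_roots_unity card_roots_unity_eq power_0_left)
  have dp: "degree p \<le> n"
  proof -
    have "degree p \<le> (\<Sum>j<n. degree [:1, - cis (- 2 * pi * real j / real n):])"
      unfolding p_def using degree_prod_sum_le[of "{..<n}" "\<lambda>j. [:1, - cis (- 2 * pi * real j / real n):]"] by (simp add: o_def)
    also have "\<dots> \<le> (\<Sum>j<n. 1)" by (intro sum_mono) auto
    finally show ?thesis by simp
  qed
  have dq: "degree q \<le> n" unfolding q_def
    by (metis degree_diff_le degree_monom_le degree_1 le0)
  have "p = q"
  proof (rule poly_eqI_degree[of A])
    fix x assume "x \<in> A"
    then consider "x = 0" | "x ^ n = 1" by (auto simp: A_def)
    thus "poly p x = poly q x"
    proof cases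
      case 1 thus ?thesis using assms by (simp add: pp pq)
    next
      case 2
      then obtain k where k: "k < n" "x = cis (2 * pi * real k / real n)"
        using Complex.bij_betw_roots_unity[OF assms] unfolding bij_betw_def by auto
      have "x * cis (- 2 * pi * real k / real n) = 1"
        using k by (simp add: cis_mult)
      hence "poly p x = 0" unfolding pp using k
        by (intro prod_zero bexI[of _ k]) auto
      thus ?thesis using 2 by (simp add: pq)
    qed
  qed (use cardA dp dq in auto)
  thus ?thesis using pp pq by metis
qed

lemma prod_split_mult:
  "(\<Prod>l<d. \<Prod>m<N. f (l + m * d)) = (\<Prod>k<N * d. f k :: 'a::comm_monoid_mult)" for N d :: nat
proof (induction N)
  case 0 thus ?case by simp
next
  case (Suc N)
  have "(\<Prod>k<Suc N * d. f k) = (\<Prod>k\<in>{0..<N * d + d}. f k)" by (simp add: add.commute atLeast0LessThan)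
  also have "\<dots> = (\<Prod>k\<in>{0..<N * d}. f k) * (\<Prod>k\<in>{N*d..<N * d + d}. f k)"
    by (rule prod.atLeastLessThan_concat[symmetric]) auto
  also have "(\<Prod>k\<in>{N*d..<N * d + d}. f k) = (\<Prod>l\<in>{0..<d}. f (l + N * d))"
    using prod.shift_bounds_nat_ivl[of f 0 "N*d" d] by (simp add: add.commute)
  finally show ?case using Suc.IH by (simp add: prod.distrib atLeast0LessThan mult.commute)
qed


lemma e_real: "e (of_real x) = cis (2 * pi * x)"
  by (simp add: e_def cis_conv_exp mult_ac)

theorem proposition4p45:
  fixes r1 r2 :: rat and a b d :: int and \<tau> :: complex
  assumes "0 \<le> b" and "b < a" and "d \<ge> 1" and "Im \<tau> > 0"
  shows "varpi_s (vector [of_rat r1, of_rat r2]) ((of_int a * \<tau> + of_int b) / of_int d) =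
    (\<Prod>j<nat a. \<Prod>l<nat d.
       varpi_s (matrix_inv (matM a b d) *v vector [real j + of_rat r1, real l + of_rat r2]) \<tau>)"
proof -
  define q1 :: real where "q1 = of_rat r1"
  define q2 :: real where "q2 = of_rat r2"
  define A where "A = nat a"
  define D where "D = nat d"
  have a0: "a > 0" and A0: "A > 0" and D0: "D > 0" using assms by (auto simp: A_def D_def)
  have aA: "of_nat A = (of_int a :: 'x::ring_1)" using a0 by (simp add: A_def)
  have dD: "of_nat D = (of_int d :: 'x::ring_1)" using assms by (simp add: D_def)
  define \<tau>' where "\<tau>' = (of_int a * \<tau> + of_int b) / of_int d"
  have Im': "Im \<tau>' > 0" using assms a0 by (simp add: \<tau>'_def Im_divide_of_real[of _ "of_int d", simplified])
  define z0 where "z0 = of_real q2 * \<tau>' - of_real q1"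
  define s1 where "s1 j l = (real j + q1) / of_int a - of_int b * (real l + q2) / (of_int a * of_int d)" for j l :: nat
  define s2 where "s2 l = (real l + q2) / of_int d" for l :: nat
  define Z where "Z j l = of_real (s2 l) * \<tau> - of_real (s1 j l)" for j l :: nat
  have L: "varpi_s (vector [of_rat r1, of_rat r2]) \<tau>' = varpi z0 \<tau>'"
    by (simp add: varpi_s_def z0_def q1_def q2_def)
  have R: "varpi_s (matrix_inv (matM a b d) *v vector [real j + of_rat r1, real l + of_rat r2]) \<tau> = varpi (Z j l) \<tau>" for j l
    using a0 assms by (simp add: varpi_s_def inv_apply Z_def s1_def s2_def q1_def q2_def)
  define f where "f = (\<lambda>k::nat. 1 - e (z0 + of_nat k * \<tau>'))"
  have inner: "(\<Prod>j<A. 1 - e (Z j l + of_nat m * \<tau>)) = f (l + m * D)" for l m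
  proof -
    define W where "W = of_real (s2 l) * \<tau> - of_real (q1 / of_int a - of_int b * s2 l / of_int a) + of_nat m * \<tau>"
    have "Z j l + of_nat m * \<tau> = W + of_real (- real j / real A)" for j
      using a0 assms by (simp add: Z_def W_def s1_def s2_def aA field_simps)
    hence "e (Z j l + of_nat m * \<tau>) = e W * cis (- 2 * pi * real j / real A)" for j
      by (simp only: e_add e_real) (simp add: mult_ac)
    hence "(\<Prod>j<A. 1 - e (Z j l + of_nat m * \<tau>)) = (\<Prod>j<A. 1 - e W * cis (- 2 * pi * real j / real A))"
      by simp
    also have "\<dots> = 1 - e W ^ A" by (rule prod_roots[OF A0])
    also have "e W ^ A = e (of_nat A * W)" by (simp add: e_nat_mult)
    also have "of_nat A * W + of_int (of_nat m * b) = z0 + of_nat (l + m * D) * \<tau>'"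
      using a0 assms by (simp add: W_def z0_def \<tau>'_def s2_def aA dD field_simps)
    hence "e (of_nat A * W) = e (z0 + of_nat (l + m * D) * \<tau>')"
      by (metis e_add e_int mult_1_right)
    finally show ?thesis by (simp add: f_def)
  qed
  have key: "(\<Prod>j<A. \<Prod>l<D. \<Prod>m<N. 1 - e (Z j l + of_nat m * \<tau>)) = (\<Prod>k<N * D. f k)" for N
  proof -
    have "(\<Prod>j<A. \<Prod>l<D. \<Prod>m<N. 1 - e (Z j l + of_nat m * \<tau>))
        = (\<Prod>l<D. \<Prod>j<A. \<Prod>m<N. 1 - e (Z j l + of_nat m * \<tau>))" by (rule prod.swap)
    also have "\<dots> = (\<Prod>l<D. \<Prod>m<N. \<Prod>j<A. 1 - e (Z j l + of_nat m * \<tau>))"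
      by (intro prod.cong refl prod.swap)
    also have "\<dots> = (\<Prod>l<D. \<Prod>m<N. f (l + m * D))" by (simp add: inner)
    also have "\<dots> = (\<Prod>k<N * D. f k)" by (rule prod_split_mult)
    finally show ?thesis .
  qed
  have lim1: "(\<lambda>N. \<Prod>j<A. \<Prod>l<D. \<Prod>m<N. 1 - e (Z j l + of_nat m * \<tau>))
      \<longlonglongrightarrow> (\<Prod>j<A. \<Prod>l<D. varpi (Z j l) \<tau>)"
    using assms by (intro tendsto_prod varpi_lim) auto
  have "(\<lambda>N. \<Prod>k<N. f k) \<longlonglongrightarrow> varpi z0 \<tau>'" unfolding f_def by (rule varpi_lim[OF Im'])
  moreover have "strict_mono (\<lambda>N. N * D)" using D0 by (intro strict_monoI) auto
  ultimately have "(\<lambda>N. \<Prod>k<N * D. f k) \<longlonglongrightarrow> varpi z0 \<tau>'"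
    using LIMSEQ_subseq_LIMSEQ unfolding o_def by blast
  hence lim2: "(\<lambda>N. \<Prod>j<A. \<Prod>l<D. \<Prod>m<N. 1 - e (Z j l + of_nat m * \<tau>)) \<longlonglongrightarrow> varpi z0 \<tau>'"
    by (simp add: key)
  have "varpi z0 \<tau>' = (\<Prod>j<A. \<Prod>l<D. varpi (Z j l) \<tau>)" using LIMSEQ_unique[OF lim2 lim1] .
  thus ?thesis using L R by (simp add: \<tau>'_def A_def D_def)
qed

end
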